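(* Let $V$ be the simple branching: the quotient of the disjoint union $R_1\sqcup R_2$ of two copies of $\mathbb{R}$ by the equivalence relation identifying the point of coordinate $t$ in $R_1$ with the point of coordinate $t$ in $R_2$ whenever $t<0$ (and identifying nothing else). Then $V$ admits two $C^\infty$-differentiable structures that are not isomorphic, i.e. there is no homeomorphism from $V$ with the first structure to $V$ with the second structure which is $C^\infty$ and has a $C^\infty$ inverse.
   Context: A topological manifold need not be Hausdorff. A $C^r$-differentiable structure ($r$ a positive integer or $\infty$) on an $n$-dimensional manifold $V$ is given by an atlas of charts $h_i:\mathbb{R}^n\to V$ (homeomorphisms onto open subsets covering $V$) such that every transition map $h_j^{-1}h_i$, from $h_i^{-1}(U_i\cap U_j)$ to $h_j^{-1}(U_i\cap U_j)$, is a $C^r$ homeomorphism between open subsets of $\mathbb{R}^n$; two atlases define the same structure if their union is still such an atlas. A map between $C^r$ manifolds is $C^r$ if it is $C^r$ when read in charts. *)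

theory Defs
  imports "HOL-Analysis.Analysis"
begin

definition quotient_topology :: "'a topology \<Rightarrow> ('a \<Rightarrow> 'b) \<Rightarrow> 'b topology" where
  "quotient_topology X q =
     topology (\<lambda>U. U \<subseteq> q ` topspace X \<and> openin X {x \<in> topspace X. q x \<in> U})"

(* Disjoint union R_1 \<sqcup> R_2 of two copies of the real line: R_1 = {True} \<times> UNIV, R_2 = {False} \<times> UNIV *)
definition two_lines :: "(bool \<times> real) topology" where
  "two_lines = sum_topology (\<lambda>_. euclideanreal) UNIV"

definition branch_rel :: "bool \<times> real \<Rightarrow> bool \<times> real \<Rightarrow> bool" where
  "branch_rel p q \<longleftrightarrow> snd p = snd q \<and> (fst p = fst q \<or> snd p < 0)"

definition branch_class :: "bool \<times> real \<Rightarrow> (bool \<times> real) set" where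
  "branch_class p = {q. branch_rel p q}"

definition simple_branching :: "(bool \<times> real) set topology" where
  "simple_branching = quotient_topology two_lines branch_class"

definition smooth_on :: "real set \<Rightarrow> (real \<Rightarrow> real) \<Rightarrow> bool" where
  "smooth_on S f \<longleftrightarrow> (\<forall>k. \<forall>x\<in>S. ((deriv ^^ k) f) field_differentiable (at x))"

definition smooth_atlas :: "'a topology \<Rightarrow> (real \<Rightarrow> 'a) set \<Rightarrow> bool" where
  "smooth_atlas V A \<longleftrightarrow>
     (\<forall>h\<in>A. openin V (range h) \<and> homeomorphic_map euclideanreal (subtopology V (range h)) h) \<and>
     (\<Union>h\<in>A. range h) = topspace V \<and>
     (\<forall>h\<in>A. \<forall>k\<in>A. smooth_on (h -` range k) (\<lambda>x. inv k (h x)))"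

definition smooth_map_atlas :: "(real \<Rightarrow> 'a) set \<Rightarrow> (real \<Rightarrow> 'b) set \<Rightarrow> ('a \<Rightarrow> 'b) \<Rightarrow> bool" where
  "smooth_map_atlas A B f \<longleftrightarrow>
     (\<forall>h\<in>A. \<forall>k\<in>B. smooth_on (h -` (f -` range k)) (\<lambda>x. inv k (f (h x))))"

end

theory Submission
  imports Defs
begin

definition bc :: "bool \<Rightarrow> real \<Rightarrow> (bool \<times> real) set" where
  "bc i t = branch_class (i, t)"

lemma bc_eq: "bc i t = bc j s \<longleftrightarrow> t = s \<and> (i = j \<or> t < 0)"
proof
  assume h: "bc i t = bc j s"
  have "(j, s) \<in> bc j s" by (simp add: bc_def branch_class_def branch_rel_def)
  then have "(j, s) \<in> bc i t" using h by simp
  then show "t = s \<and> (i = j \<or> t < 0)" by (auto simp: bc_def branch_class_def branch_rel_def)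
next
  assume "t = s \<and> (i = j \<or> t < 0)"
  then show "bc i t = bc j s" by (auto simp: bc_def branch_class_def branch_rel_def)
qed

lemma range_bc_all: "range branch_class = range (bc True) \<union> range (bc False)"
proof -
  have "branch_class p \<in> range (bc True) \<union> range (bc False)" for p
    by (cases p; cases "fst p") (auto simp: bc_def)
  moreover have "range (bc True) \<union> range (bc False) \<subseteq> range branch_class"
    by (auto simp: bc_def)
  ultimately show ?thesis by blast
qed

lemma istop_quot: "istopology (\<lambda>U. U \<subseteq> q ` topspace X \<and> openin X {x \<in> topspace X. q x \<in> U})"
proof -
  have 1: "openin X {x \<in> topspace X. q x \<in> S \<inter> T}"
    if "openin X {x \<in> topspace X. q x \<in> S}" "openin X {x \<in> topspace X. q x \<in> T}" for S T
  proof -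
    have "openin X ({x \<in> topspace X. q x \<in> S} \<inter> {x \<in> topspace X. q x \<in> T})" using that by blast
    moreover have "{x \<in> topspace X. q x \<in> S \<inter> T} = {x \<in> topspace X. q x \<in> S} \<inter> {x \<in> topspace X. q x \<in> T}" by blast
    ultimately show ?thesis by simp
  qed
  have 2: "openin X {x \<in> topspace X. q x \<in> \<Union>K}"
    if "\<forall>S\<in>K. openin X {x \<in> topspace X. q x \<in> S}" for K
  proof -
    have "openin X (\<Union>S\<in>K. {x \<in> topspace X. q x \<in> S})" using that by blast
    moreover have "{x \<in> topspace X. q x \<in> \<Union>K} = (\<Union>S\<in>K. {x \<in> topspace X. q x \<in> S})" by blast
    ultimately show ?thesis by simp
  qed
  show ?thesis unfolding istopology_def using 1 2 by blast
qed

lemma openin_quot: "openin (quotient_topology X q) U \<longleftrightarrow> U \<subseteq> q ` topspace X \<and> openin X {x \<in> topspace X. q x \<in> U}"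
  unfolding quotient_topology_def by (subst topology_inverse'[OF istop_quot]) (rule refl)

lemma openin_two_lines: "openin two_lines S \<longleftrightarrow> open {t. (True, t) \<in> S} \<and> open {t. (False, t) \<in> S}"
  by (simp add: two_lines_def openin_sum_topology all_bool_eq)

lemma topspace_two_lines: "topspace two_lines = UNIV"
  by (simp add: two_lines_def)

lemma openin_V: "openin simple_branching U \<longleftrightarrow>
   U \<subseteq> range branch_class \<and> open {t. bc True t \<in> U} \<and> open {t. bc False t \<in> U}"
  unfolding simple_branching_def openin_quot
  by (simp add: topspace_two_lines openin_two_lines bc_def)

lemma topspace_V: "topspace simple_branching = range branch_class"
proof -
  have "openin simple_branching (range branch_class)"
    by (simp add: openin_V bc_def)
  then have "range branch_class \<subseteq> topspace simple_branching" by (rule openin_subset)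
  moreover have "topspace simple_branching \<subseteq> range branch_class"
    using openin_topspace[of simple_branching] openin_V by blast
  ultimately show ?thesis by blast
qed

lemma topspace_V': "topspace simple_branching = range (bc True) \<union> range (bc False)"
  using topspace_V range_bc_all by simp

lemma bc_in_top[simp]: "bc i t \<in> topspace simple_branching"
  by (cases i) (auto simp: topspace_V')

lemma mem_range_bc: "bc j t \<in> range (bc i) \<longleftrightarrow> (i = j \<or> t < 0)"
  by (auto simp: bc_eq)

lemma open_image_bc: assumes "open B" shows "openin simple_branching (bc i ` B)"
proof -
  have eq: "{t. bc j t \<in> bc i ` B} = B \<inter> {t. i = j \<or> t < 0}" for j
    by (auto simp: bc_eq)
  have op: "open (B \<inter> {t. i = j \<or> t < 0})" for j
  proof (cases "i = j")
    case True then show ?thesis using assms by simp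
  next
    case False
    have "{t::real. i = j \<or> t < 0} = {..<0}" using False by auto
    then show ?thesis using assms by (simp add: open_Int)
  qed
  have "bc i ` B \<subseteq> range branch_class" by (auto simp: bc_def)
  then show ?thesis unfolding openin_V eq using op[of True] op[of False] by simp
qed

lemma open_range_bc: "openin simple_branching (range (bc i))"
  using open_image_bc[of UNIV i] by simp

lemma continuous_bc: "continuous_map euclideanreal simple_branching (bc i)"
  unfolding continuous_map_def
proof (intro conjI allI impI)
  show "bc i \<in> topspace euclideanreal \<rightarrow> topspace simple_branching" by simp
  fix U assume "openin simple_branching U"
  then have "open {t. bc True t \<in> U}" "open {t. bc False t \<in> U}" by (auto simp: openin_V)
  then show "openin euclideanreal {x \<in> topspace euclideanreal. bc i x \<in> U}"
    by (cases i) auto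
qed

lemma inj_bc: "inj (bc i)"
  by (auto simp: inj_def bc_eq)

lemma chart_bc: "homeomorphic_map euclideanreal (subtopology simple_branching (range (bc i))) (bc i)"
proof (rule bijective_open_imp_homeomorphic_map)
  show "continuous_map euclideanreal (subtopology simple_branching (range (bc i))) (bc i)"
    using continuous_bc by (auto simp: continuous_map_in_subtopology)
  show "open_map euclideanreal (subtopology simple_branching (range (bc i))) (bc i)"
    unfolding open_map_def
    using open_image_bc by (auto simp: openin_open_subtopology[OF open_range_bc])
  show "bc i ` topspace euclideanreal = topspace (subtopology simple_branching (range (bc i)))"
    by auto
  show "inj_on (bc i) (topspace euclideanreal)" using inj_bc by (simp add: inj_on_def inj_def)
qed

lemma cube_root: "root 3 ((s::real) ^ 3) = s"
  by (simp add: odd_real_root_power_cancel)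

lemma root_cube: "(root 3 (s::real)) ^ 3 = s"
  by (simp add: odd_real_root_pow)

lemma homeo_cube: "homeomorphic_map euclideanreal euclideanreal (\<lambda>s::real. s ^ 3)"
proof -
  have "homeomorphic_maps euclideanreal euclideanreal (\<lambda>s::real. s ^ 3) (root 3)"
    unfolding homeomorphic_maps_def
    by (auto simp: cube_root root_cube intro!: continuous_intros)
  then show ?thesis by (auto simp: homeomorphic_map_maps)
qed

definition k2 :: "real \<Rightarrow> (bool \<times> real) set" where
  "k2 s = bc False (s ^ 3)"

lemma range_k2: "range k2 = range (bc False)"
proof -
  have "bc False t \<in> range k2" for t
    using root_cube[of t] unfolding k2_def by (metis rangeI)
  then show ?thesis by (auto simp: k2_def)
qed

lemma inj_k2: "inj k2"
  unfolding inj_def k2_def bc_eq by (metis cube_root)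

lemma chart_k2: "homeomorphic_map euclideanreal (subtopology simple_branching (range k2)) k2"
proof -
  have "homeomorphic_map euclideanreal (subtopology simple_branching (range (bc False))) (bc False \<circ> (\<lambda>s. s ^ 3))"
    by (rule homeomorphic_map_compose[OF homeo_cube chart_bc])
  moreover have "bc False \<circ> (\<lambda>s. s ^ 3) = k2" by (auto simp: k2_def)
  ultimately show ?thesis using range_k2 by simp
qed

lemma continuous_k2: "continuous_map euclideanreal simple_branching k2"
proof -
  have "k2 = bc False \<circ> (\<lambda>s. s ^ 3)" by (auto simp: k2_def)
  then show ?thesis
    by (metis continuous_bc continuous_map_compose homeo_cube homeomorphic_imp_continuous_map)
qed

lemma diff_transfer:
  assumes "open S" "x \<in> S" "\<And>y. y \<in> S \<Longrightarrow> F y = G y" "G field_differentiable at x"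
  shows "F field_differentiable at x"
proof -
  obtain D where "(G has_field_derivative D) (at x)" using assms(4) field_differentiable_def by blast
  then have "(F has_field_derivative D) (at x)"
    by (rule has_field_derivative_transform_within_open[OF _ assms(1,2)]) (simp add: assms(3))
  then show ?thesis using field_differentiable_def by blast
qed

lemma iter_deriv_local:
  assumes "open S" "x \<in> S" "\<And>y. y \<in> S \<Longrightarrow> F y = G y"
  shows "(deriv ^^ k) F x = (deriv ^^ k) G x"
  by (rule higher_deriv_cong_ev) (use assms in \<open>auto elim!: eventually_mono[OF eventually_nhds_in_open]\<close>)

lemma smooth_on_cong:
  assumes "open S" "\<And>y. y \<in> S \<Longrightarrow> F y = G y" "smooth_on S G"
  shows "smooth_on S F"
  unfolding smooth_on_def
proof (intro allI ballI)
  fix k x assume x: "x \<in> S"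
  have "(deriv ^^ k) F y = (deriv ^^ k) G y" if "y \<in> S" for y
    using iter_deriv_local[of S y F G k] assms(1,2) that by blast
  then show "(deriv ^^ k) F field_differentiable at x"
    using diff_transfer[OF assms(1) x] assms(3) x unfolding smooth_on_def by blast
qed

lemma smooth_on_mono: "smooth_on S F \<Longrightarrow> T \<subseteq> S \<Longrightarrow> smooth_on T F"
  unfolding smooth_on_def by blast

lemma iter_step:
  assumes "open S" "x \<in> S" "\<And>y. y \<in> S \<Longrightarrow> (F has_field_derivative F' y) (at y)"
    "(deriv ^^ k) F' field_differentiable at x"
  shows "(deriv ^^ Suc k) F field_differentiable at x"
proof -
  have eq: "\<And>y. y \<in> S \<Longrightarrow> deriv F y = F' y" using assms(3) DERIV_imp_deriv by blast
  have "(deriv ^^ Suc k) F = (deriv ^^ k) (deriv F)" by (simp only: funpow_Suc_right comp_def)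
  moreover have "(deriv ^^ k) (deriv F) y = (deriv ^^ k) F' y" if "y \<in> S" for y
    using iter_deriv_local[of S y "deriv F" F' k] assms(1) eq that by blast
  ultimately show ?thesis using diff_transfer[OF assms(1,2)] assms(4) by metis
qed

lemma smooth_const: "smooth_on S (\<lambda>_. c)"
proof -
  have "(deriv ^^ k) (\<lambda>_. c) field_differentiable at x" for k x and c :: real
  proof (induction k arbitrary: c)
    case 0 then show ?case by simp
  next
    case (Suc k)
    show ?case by (rule iter_step[of UNIV _ _ "\<lambda>_. 0"]) (auto intro: Suc)
  qed
  then show ?thesis unfolding smooth_on_def by blast
qed

lemma smooth_id: "smooth_on S (\<lambda>x. x)"
proof -
  have "(deriv ^^ k) (\<lambda>x. x) field_differentiable at x" for k and x :: real
  proof (cases k)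
    case 0 then show ?thesis by simp
  next
    case (Suc j)
    show ?thesis unfolding Suc
      by (rule iter_step[of UNIV _ _ "\<lambda>_. 1"]) (use smooth_const[of UNIV 1, unfolded smooth_on_def] in auto)
  qed
  then show ?thesis unfolding smooth_on_def by blast
qed

lemma smooth_powr: "smooth_on {..<0} (\<lambda>x::real. c * (-x) powr a)"
proof -
  have "\<forall>a c. (deriv ^^ k) (\<lambda>x::real. c * (-x) powr a) field_differentiable at x" if "x < 0" for k x
    using that
  proof (induction k arbitrary: x)
    case 0
    have "((\<lambda>x::real. c * (-x) powr a) has_field_derivative (c * (a * (-x) powr (a - 1) * (-1)))) (at x)" for a c
      using 0 by (auto intro!: derivative_eq_intros)
    then show ?case by (auto simp: field_differentiable_def)
  next
    case (Suc k)
    show ?case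
    proof (intro allI)
      fix a c
      show "(deriv ^^ Suc k) (\<lambda>x::real. c * (-x) powr a) field_differentiable at x"
        apply (rule iter_step[of "{..<0}" _ _ "\<lambda>x. (- c * a) * (-x) powr (a - 1)"])
           apply simp
          apply (simp add: Suc.prems)
         apply (auto intro!: derivative_eq_intros)[1]
        using Suc.IH[OF Suc.prems] by blast
    qed
  qed
  then show ?thesis unfolding smooth_on_def by auto
qed

lemma cube_neg: "(s::real) ^ 3 < 0 \<longleftrightarrow> s < 0"
  by simp

lemma trans_bc: "smooth_on (bc i -` range (bc j)) (\<lambda>x. inv (bc j) (bc i x))"
proof -
  have S: "bc i -` range (bc j) = {x. j = i \<or> x < 0}" by (auto simp: bc_eq)
  have op: "open {x::real. j = i \<or> x < 0}"
    by (cases "j = i") (auto simp: open_lessThan[unfolded lessThan_def])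
  have "inv (bc j) (bc i x) = x" if "x \<in> {x. j = i \<or> x < 0}" for x
  proof -
    have "bc i x = bc j x" using that by (auto simp: bc_eq)
    then show ?thesis using inj_bc by (simp add: inv_f_f)
  qed
  then show ?thesis unfolding S by (intro smooth_on_cong[OF op _ smooth_id]) auto
qed

lemma trans_1k: "smooth_on (bc True -` range k2) (\<lambda>x. inv k2 (bc True x))"
proof -
  have S: "bc True -` range k2 = {..<0}" by (auto simp: range_k2 bc_eq)
  have "inv k2 (bc True x) = -1 * (-x) powr (1/3)" if "x \<in> {..<0}" for x
  proof -
    have "bc True x = k2 (root 3 x)" using that by (auto simp: k2_def root_cube bc_eq)
    then have "inv k2 (bc True x) = root 3 x" using inj_k2 by (simp add: inv_f_f)
    also have "\<dots> = - root 3 (-x)" by (simp add: real_root_minus)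
    also have "\<dots> = -1 * (-x) powr (1/3)" using that by (simp add: root_powr_inverse)
    finally show ?thesis .
  qed
  then show ?thesis unfolding S by (intro smooth_on_cong[OF _ _ smooth_powr[of "-1" "1/3"]]) (simp, blast)
qed

lemma trans_k1: "smooth_on (k2 -` range (bc True)) (\<lambda>s. inv (bc True) (k2 s))"
proof -
  have S: "k2 -` range (bc True) = {..<0}" by (auto simp: k2_def bc_eq cube_neg)
  have "inv (bc True) (k2 s) = -1 * (-s) powr 3" if "s \<in> {..<0}" for s
  proof -
    have "k2 s = bc True (s ^ 3)" using that by (auto simp: k2_def bc_eq cube_neg)
    then have "inv (bc True) (k2 s) = s ^ 3" using inj_bc by (simp add: inv_f_f)
    also have "\<dots> = -1 * (-s) powr 3" using that by (simp add: powr_numeral)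
    finally show ?thesis .
  qed
  then show ?thesis unfolding S by (intro smooth_on_cong[OF _ _ smooth_powr[of "-1" 3]]) (simp, blast)
qed

lemma trans_kk: "smooth_on (k2 -` range k2) (\<lambda>s. inv k2 (k2 s))"
  using inj_k2 by (simp add: inv_f_f smooth_id)

definition A1 :: "(real \<Rightarrow> (bool \<times> real) set) set" where "A1 = {bc True, bc False}"
definition A2 :: "(real \<Rightarrow> (bool \<times> real) set) set" where "A2 = {bc True, k2}"

lemma atlas1: "smooth_atlas simple_branching A1"
  unfolding smooth_atlas_def A1_def
  using chart_bc open_range_bc trans_bc by (auto simp: topspace_V')

lemma atlas2: "smooth_atlas simple_branching A2"
  unfolding smooth_atlas_def A2_def
  using chart_bc open_range_bc trans_bc chart_k2 trans_1k trans_k1 trans_kk range_k2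
  by (auto simp: topspace_V')

lemma inseparable:
  assumes "openin simple_branching U" "openin simple_branching W" "bc True 0 \<in> U" "bc False 0 \<in> W"
  shows "U \<inter> W \<noteq> {}"
proof -
  have "open {t. bc True t \<in> U}" "open {t. bc False t \<in> W}" using assms(1,2) by (auto simp: openin_V)
  then obtain d1 d2 where d: "d1 > 0" "ball 0 d1 \<subseteq> {t. bc True t \<in> U}" "d2 > 0" "ball 0 d2 \<subseteq> {t. bc False t \<in> W}"
    using assms(3,4) by (metis open_contains_ball mem_Collect_eq)
  define r where "r = - min d1 d2 / 2"
  have "r \<in> ball 0 d1" "r \<in> ball 0 d2" "r < 0" using d by (auto simp: r_def dist_real_def)
  then have "bc True r \<in> U" "bc False r \<in> W" "bc True r = bc False r" using d by (auto simp: bc_eq subset_iff)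
  then show ?thesis by auto
qed

lemma separate:
  assumes "x \<in> topspace simple_branching" "y \<in> topspace simple_branching" "x \<noteq> y"
    "{x, y} \<noteq> {bc True 0, bc False 0}"
  shows "\<exists>U W. openin simple_branching U \<and> openin simple_branching W \<and> x \<in> U \<and> y \<in> W \<and> U \<inter> W = {}"
proof -
  obtain i t where x: "x = bc i t" using assms(1) topspace_V' by auto
  obtain j s where y: "y = bc j s" using assms(2) topspace_V' by auto
  show ?thesis
  proof (cases "t = s")
    case False
    define e where "e = dist t s / 2"
    have e: "e > 0" using False by (simp add: e_def)
    define U where "U = bc True ` ball t e \<union> bc False ` ball t e"
    define W where "W = bc True ` ball s e \<union> bc False ` ball s e"
    have "openin simple_branching U" "openin simple_branching W"
      unfolding U_def W_def by (auto intro!: openin_Un open_image_bc)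
    moreover have "x \<in> U" "y \<in> W" unfolding x y U_def W_def using e by (cases i; cases j; auto)+
    moreover have "U \<inter> W = {}"
    proof -
      have "ball t e \<inter> ball s e = {}" unfolding e_def
        by (auto simp: dist_real_def abs_if split: if_splits)
      then show ?thesis unfolding U_def W_def by (auto simp: bc_eq)
    qed
    ultimately show ?thesis by blast
  next
    case True
    then have ij: "i \<noteq> j" "\<not> t < 0" using assms(3) x y by (auto simp: bc_eq)
    have "t \<noteq> 0"
    proof
      assume "t = 0"
      then have "{x, y} = {bc True 0, bc False 0}" using ij x y True by (cases i; cases j) auto
      then show False using assms(4) by simp
    qed
    then have t: "t > 0" using ij by simp
    define U where "U = bc i ` {0<..}"
    define W where "W = bc j ` {0<..}"
    have "openin simple_branching U" "openin simple_branching W"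
      unfolding U_def W_def by (auto intro!: open_image_bc)
    moreover have "x \<in> U" "y \<in> W" unfolding x y U_def W_def using t True by auto
    moreover have "U \<inter> W = {}" unfolding U_def W_def using ij by (auto simp: bc_eq)
    ultimately show ?thesis by blast
  qed
qed

lemma analytic_core:
  fixes b c :: "real \<Rightarrow> real"
  assumes "b field_differentiable at 0" "c field_differentiable at 0" "b 0 = 0" "d > 0"
    "\<And>t. t \<in> {-d<..0} \<Longrightarrow> c ((b t) ^ 3) = t"
  shows False
proof -
  obtain B where B: "(b has_field_derivative B) (at 0)" using assms(1) field_differentiable_def by blast
  obtain C where C: "(c has_field_derivative C) (at 0)" using assms(2) field_differentiable_def by blast
  have "((\<lambda>t. (b t) ^ 3) has_field_derivative (of_nat 3 * (b 0) ^ 2 * B)) (at 0)"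
    using DERIV_power[OF B, of 3] by (simp add: mult_ac)
  then have "((\<lambda>t. (b t) ^ 3) has_field_derivative 0) (at 0)" using assms(3) by simp
  moreover have "(c has_field_derivative C) (at ((\<lambda>t. (b t) ^ 3) 0))" using C assms(3) by simp
  ultimately have "((\<lambda>t. c ((b t) ^ 3)) has_field_derivative C * 0) (at 0)"
    using DERIV_chain2[of c C "\<lambda>t. (b t) ^ 3" 0 0 UNIV] by simp
  then have "((\<lambda>t. c ((b t) ^ 3)) has_field_derivative 0) (at 0 within {-d<..0})"
    by (simp add: has_field_derivative_at_within)
  moreover have "((\<lambda>t. t) has_field_derivative 1) (at 0 within {-d<..0})"
    by (rule DERIV_ident)
  then have "((\<lambda>t. c ((b t) ^ 3)) has_field_derivative 1) (at 0 within {-d<..0})"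
    by (rule has_field_derivative_transform_within[OF _ assms(4)]) (use assms(4,5) in auto)
  moreover have "at (0::real) within {-d<..0} \<noteq> bot"
    using assms(4) by (simp add: trivial_limit_within)
  ultimately show False
    using vector_derivative_unique_within by (metis has_real_derivative_iff_has_vector_derivative zero_neq_one)
qed

lemma no_iso_case:
  assumes hm: "homeomorphic_maps simple_branching simple_branching f g"
    and sf: "smooth_map_atlas A1 A2 f" and sg: "smooth_map_atlas A2 A1 g"
    and uw: "u \<in> A1" "w \<in> A1" "\<And>t. t < 0 \<Longrightarrow> u t = w t"
    and f0: "f (u 0) = bc True 0" "f (w 0) = k2 0"
  shows False
proof -
  have cf: "continuous_map simple_branching simple_branching f"
    and gf: "\<And>x. x \<in> topspace simple_branching \<Longrightarrow> g (f x) = x"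
    using hm by (auto simp: homeomorphic_maps_def)
  have ucont: "continuous_map euclideanreal simple_branching u"
    and wcont: "continuous_map euclideanreal simple_branching w"
    and uinj: "inj u" and utop: "\<And>t. u t \<in> topspace simple_branching"
    using uw(1,2) continuous_bc inj_bc by (auto simp: A1_def)
  have "openin euclideanreal {x \<in> topspace euclideanreal. (f \<circ> u) x \<in> range (bc True)}"
    by (rule openin_continuous_map_preimage[OF continuous_map_compose[OF ucont cf] open_range_bc])
  then have Sa: "open {t. f (u t) \<in> range (bc True)}" by simp
  have "openin euclideanreal {x \<in> topspace euclideanreal. (f \<circ> w) x \<in> range (bc False)}"
    by (rule openin_continuous_map_preimage[OF continuous_map_compose[OF wcont cf] open_range_bc])
  then have Sb: "open {t. f (w t) \<in> range k2}" by (simp add: range_k2)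
  define b where "b = (\<lambda>t. inv k2 (f (w t)))"
  define c where "c = (\<lambda>s. inv u (g (bc True s)))"
  have "k2 \<in> A2" "bc True \<in> A2" by (auto simp: A2_def)
  then have smb: "smooth_on (w -` (f -` range k2)) b" and smc: "smooth_on (bc True -` (g -` range u)) c"
    using sf sg uw unfolding smooth_map_atlas_def b_def c_def by blast+
  have g0: "g (bc True 0) = u 0" using f0(1) gf utop by metis
  have "0 \<in> w -` (f -` range k2)" using f0(2) by simp
  then have bd: "b field_differentiable at 0" using smb unfolding smooth_on_def
    by (metis funpow_0)
  have "0 \<in> bc True -` (g -` range u)" using g0 by simp
  then have cd: "c field_differentiable at 0" using smc unfolding smooth_on_def
    by (metis funpow_0)
  have b0: "b 0 = 0" unfolding b_def f0(2) using inj_k2 by (simp add: inv_f_f)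
  have c0: "c 0 = 0" unfolding c_def g0 using uinj by (simp add: inv_f_f)
  have "open ({t. f (u t) \<in> range (bc True)} \<inter> {t. f (w t) \<in> range k2})" using Sa Sb by blast
  moreover have "0 \<in> {t. f (u t) \<in> range (bc True)} \<inter> {t. f (w t) \<in> range k2}"
    using f0 by auto
  ultimately obtain d where d: "d > 0" "ball 0 d \<subseteq> {t. f (u t) \<in> range (bc True)} \<inter> {t. f (w t) \<in> range k2}"
    by (meson open_contains_ball)
  have key: "c ((b t) ^ 3) = t" if t: "t \<in> {-d<..0}" for t
  proof (cases "t = 0")
    case True then show ?thesis using b0 c0 by simp
  next
    case False
    then have tneg: "t < 0" and tb: "t \<in> ball 0 d" using t by (auto simp: dist_real_def)
    have inA: "f (u t) \<in> range (bc True)" and inB: "f (w t) \<in> range k2" using d(2) tb by blast+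
    then obtain r where r: "f (u t) = bc True r" by auto
    have "f (w t) = k2 (b t)" unfolding b_def using inB by (simp add: f_inv_into_f)
    then have "bc True r = bc False ((b t) ^ 3)" using r uw(3)[OF tneg] by (simp add: k2_def)
    then have "r = (b t) ^ 3" by (simp add: bc_eq)
    then have "c ((b t) ^ 3) = inv u (g (f (u t)))" unfolding c_def using r by simp
    also have "\<dots> = t" using gf utop uinj by (simp add: inv_f_f)
    finally show ?thesis .
  qed
  show False by (rule analytic_core[OF bd cd b0 d(1) key])
qed

lemma no_iso:
  assumes hm: "homeomorphic_maps simple_branching simple_branching f g"
    and sf: "smooth_map_atlas A1 A2 f" and sg: "smooth_map_atlas A2 A1 g"
  shows False
proof -
  have cf: "continuous_map simple_branching simple_branching f"
    and gf: "\<And>x. x \<in> topspace simple_branching \<Longrightarrow> g (f x) = x"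
    using hm by (auto simp: homeomorphic_maps_def)
  have ftop: "\<And>x. x \<in> topspace simple_branching \<Longrightarrow> f x \<in> topspace simple_branching"
    using cf by (simp add: continuous_map_def Pi_iff)
  define p where "p = bc True 0"
  define q where "q = bc False 0"
  have pq: "p \<noteq> q" by (simp add: p_def q_def bc_eq)
  have ptop: "p \<in> topspace simple_branching" and qtop: "q \<in> topspace simple_branching"
    by (simp_all add: p_def q_def)
  have fpq: "f p \<noteq> f q"
  proof
    assume "f p = f q"
    then have "g (f p) = g (f q)" by simp
    then show False using gf[OF ptop] gf[OF qtop] pq by simp
  qed
  have "{f p, f q} = {p, q}"
  proof (rule ccontr)
    assume ne: "{f p, f q} \<noteq> {p, q}"
    obtain U W where UW: "openin simple_branching U" "openin simple_branching W" "f p \<in> U" "f q \<in> W" "U \<inter> W = {}"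
      using separate[OF ftop[OF ptop] ftop[OF qtop] fpq] ne unfolding p_def q_def by blast
    have o1: "openin simple_branching {x \<in> topspace simple_branching. f x \<in> U}"
      using openin_continuous_map_preimage[OF cf UW(1)] .
    have o2: "openin simple_branching {x \<in> topspace simple_branching. f x \<in> W}"
      using openin_continuous_map_preimage[OF cf UW(2)] .
    have m1: "bc True 0 \<in> {x \<in> topspace simple_branching. f x \<in> U}"
      using UW(3) by (simp add: p_def)
    have m2: "bc False 0 \<in> {x \<in> topspace simple_branching. f x \<in> W}"
      using UW(4) by (simp add: q_def)
    obtain z where "z \<in> {x \<in> topspace simple_branching. f x \<in> U}" "z \<in> {x \<in> topspace simple_branching. f x \<in> W}"
      using inseparable[OF o1 o2 m1 m2] by blast
    then have "f z \<in> U \<inter> W" by simp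
    then show False using UW(5) by simp
  qed
  then have "(f p = p \<and> f q = q) \<or> (f p = q \<and> f q = p)" using fpq pq unfolding doubleton_eq_iff by blast
  moreover have k0: "k2 0 = q" by (simp add: k2_def q_def)
  ultimately show False
  proof (elim disjE conjE)
    assume a: "f p = p" "f q = q"
    have "bc True \<in> A1" "bc False \<in> A1" by (simp_all add: A1_def)
    moreover have "\<And>t. t < 0 \<Longrightarrow> bc True t = bc False t" by (simp add: bc_eq)
    moreover have "f (bc True 0) = bc True 0" "f (bc False 0) = k2 0"
      using a k0 unfolding p_def q_def by simp_all
    ultimately show False by (rule no_iso_case[OF hm sf sg])
  next
    assume a: "f p = q" "f q = p"
    have "bc False \<in> A1" "bc True \<in> A1" by (simp_all add: A1_def)
    moreover have "\<And>t. t < 0 \<Longrightarrow> bc False t = bc True t" by (simp add: bc_eq)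
    moreover have "f (bc False 0) = bc True 0" "f (bc True 0) = k2 0"
      using a k0 unfolding p_def q_def by simp_all
    ultimately show False by (rule no_iso_case[OF hm sf sg])
  qed
qed

theorem mainTheorem4:
  shows "\<exists>A1 A2. smooth_atlas simple_branching A1 \<and> smooth_atlas simple_branching A2 \<and>
     \<not> (\<exists>f g. homeomorphic_maps simple_branching simple_branching f g \<and>
             smooth_map_atlas A1 A2 f \<and> smooth_map_atlas A2 A1 g)"
proof (intro exI conjI)
  show "smooth_atlas simple_branching A1" by (rule atlas1)
  show "smooth_atlas simple_branching A2" by (rule atlas2)
  show "\<not> (\<exists>f g. homeomorphic_maps simple_branching simple_branching f g \<and>
             smooth_map_atlas A1 A2 f \<and> smooth_map_atlas A2 A1 g)"
    using no_iso by blast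
qed

end
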